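(* For a fixed value of the sticky size $N$, the node potential $\phi_x$ of a node $x$ of a pairing heap is monotone nondecreasing in each of $|x_L|$ and $|x_R|$, the sizes of its left and right subtrees in the binary view.
   Context: A pairing heap is a heap-ordered rooted ordered tree; its binary view is the leftmost-child/right-sibling representation (left child in the binary view = leftmost child in the tree, right child in the binary view = next sibling to the right). For a node $x$, $x_L$ and $x_R$ denote its left and right children in the binary view, $|\cdot|$ denotes subtree size in the binary view (a missing child has size $0$), and $|x| = |x_L|+|x_R|+1$. $N \ge 1$ is the sticky size (a power of two) and $\lg=\log_2$. Node potential: if $|x_L| > \lg N$ and $|x_R| > \lg N$, $\phi_x = 400 + 100\lg|x|$; if $|x_L| \le \lg N < |x_R|$, $\phi_x = 400 + 100\frac{|x_L|}{\lg N}\lg|x|$; if $|x_R| \le \lg N < |x_L|$, $\phi_x = 400 + 100\frac{|x_R|}{\lg N}\lg|x|$; if $|x_L| \le \lg N$ and $|x_R| \le \lg N$, $\phi_x = 0$. *)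

theory Defs
  imports Complex_Main
begin

(* Node potential of a pairing-heap node x, as a function of the sticky size N,
   l = |x_L| and r = |x_R| (binary-view subtree sizes); |x| = l + r + 1. *)
definition node_pot :: "nat \<Rightarrow> nat \<Rightarrow> nat \<Rightarrow> real" where
  "node_pot N l r =
    (let lgN = log 2 (real N); sz = real (l + r + 1) in
     if real l > lgN \<and> real r > lgN then 400 + 100 * log 2 sz
     else if real l \<le> lgN \<and> lgN < real r then 400 + 100 * (real l / lgN) * log 2 sz
     else if real r \<le> lgN \<and> lgN < real l then 400 + 100 * (real r / lgN) * log 2 sz
     else 0)"

end

theory Submission
  imports Defs
begin

lemma pot_sym: "node_pot N l r = node_pot N r l"
  unfolding node_pot_def Let_def by (auto simp: add.commute add.left_commute)

lemma pot_mono_l: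
  assumes N: "N \<ge> 1" and le: "l \<le> l'"
  shows "node_pot N l r \<le> node_pot N l' r"
proof -
  define L where "L = log 2 (real N)"
  have L0: "L \<ge> 0" using N by (simp add: L_def)
  define s where "s = log 2 (real (l + r + 1))"
  define s' where "s' = log 2 (real (l' + r + 1))"
  have s0: "s \<ge> 0" unfolding s_def by simp
  have ss: "s \<le> s'" unfolding s_def s'_def using le by simp
  have rl: "real l \<le> real l'" using le by simp
  have A: "node_pot N l r = (if real l > L \<and> real r > L then 400 + 100 * s
     else if real l \<le> L \<and> L < real r then 400 + 100 * (real l / L) * s
     else if real r \<le> L \<and> L < real l then 400 + 100 * (real r / L) * s else 0)"
    unfolding node_pot_def Let_def L_def s_def by simp
  have B: "node_pot N l' r = (if real l' > L \<and> real r > L then 400 + 100 * s'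
     else if real l' \<le> L \<and> L < real r then 400 + 100 * (real l' / L) * s'
     else if real r \<le> L \<and> L < real l' then 400 + 100 * (real r / L) * s' else 0)"
    unfolding node_pot_def Let_def L_def s'_def by simp
  have q1: "real l / L \<le> 1" if "real l \<le> L" using that L0
    by (cases "L = 0") (auto simp: divide_le_eq_1)
  have q2: "real r / L \<le> 1" if "real r \<le> L" using that L0
    by (cases "L = 0") (auto simp: divide_le_eq_1)
  have q3: "real l / L \<le> real l' / L" using rl L0 by (simp add: divide_right_mono)
  have p1: "real l / L \<ge> 0" "real r / L \<ge> 0" using L0 by auto
  have m1: "(real l / L) * s \<le> s'" if "real l \<le> L"
    using q1[OF that] p1 s0 ss by (meson mult_left_le_one_le order_trans)
  have m2: "(real l / L) * s \<le> (real l' / L) * s'"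
    using q3 p1 s0 ss by (meson mult_mono order_trans)
  have m3: "(real r / L) * s \<le> (real r / L) * s'"
    by (rule mult_left_mono[OF ss p1(2)])
  have m4: "(real r / L) * s' \<ge> 0" using p1 s0 ss by (intro mult_nonneg_nonneg) auto
  have m5: "(real l' / L) * s' \<ge> 0" using p1 L0 s0 ss by (intro mult_nonneg_nonneg) auto
  have s0': "s' \<ge> 0" using s0 ss by simp
  have gen: "\<And>a a' b b'. \<lbrakk>real l \<le> L \<Longrightarrow> a \<le> s'; a \<le> a'; b \<le> b'; b' \<ge> 0; a' \<ge> 0\<rbrakk> \<Longrightarrow>
     (if real l > L \<and> real r > L then 400 + 100 * s
     else if real l \<le> L \<and> L < real r then 400 + 100 * a
     else if real r \<le> L \<and> L < real l then 400 + 100 * b else 0)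
     \<le> (if real l' > L \<and> real r > L then 400 + 100 * s'
     else if real l' \<le> L \<and> L < real r then 400 + 100 * a'
     else if real r \<le> L \<and> L < real l' then 400 + 100 * b' else 0)"
    using rl ss s0' by (auto split: if_split)
  show ?thesis unfolding A B mult.assoc
    by (rule gen) (use m1 m2 m3 m4 m5 in \<open>simp_all add: mult.assoc\<close>)
qed

theorem lemma3:
  fixes N :: nat
  assumes "N \<ge> 1" and "\<exists>k. N = 2 ^ k"
  shows "(\<forall>l l' r. l \<le> l' \<longrightarrow> node_pot N l r \<le> node_pot N l' r) \<and>
         (\<forall>l r r'. r \<le> r' \<longrightarrow> node_pot N l r \<le> node_pot N l r')"
  using pot_mono_l[OF assms(1)] pot_sym by metis

end
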